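(* Consider the Gaussian broadcast model on $P=\mathbb Z_{\ge0}^2$ with $(\alpha_1,\alpha_2)=(1,1/2)$, fix $t\ge0$, and let $$Q_t(z,w):=\sum_{i=0}^t\sum_{j=0}^t\operatorname{Cov}\big(X_{(i,t-i)},X_{(j,t-j)}\big)z^iw^j\in\mathbb R[z,w].$$ Suppose there exist $c_0,\dots,c_t\in\mathbb R$ and $A_t\in\mathbb R\setminus\{0\}$ such that, as polynomials in $z$, $$[w^t]\Big((c_t+c_{t-1}w+\cdots+c_0w^t)\,Q_t(z,w)\Big)=A_t\sum_{i=0}^tz^i,$$ where $[w^t]R(z,w)$ denotes the coefficient of $w^t$ in $R$ viewed as a polynomial in $w$ with coefficients in $\mathbb R[z]$. Then $$S_t=\sqrt{\frac{\sum_{i=0}^tc_i}{A_t}},$$ where $S_t:=\sup\operatorname{Cov}(\zeta,X_0)/\sqrt{\operatorname{Var}(\zeta)}$, the supremum over all $\zeta=\sum_{i=0}^t b_iX_{(i,t-i)}$ with $b_i\in\mathbb R$ not all zero.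
   Context: Gaussian broadcast model on $P=\mathbb{Z}_{\ge0}^2$ with the componentwise order: $L_t=\{(i,t-i):0\le i\le t\}$; $\mathfrak p(v)$ = set of elements covered by $v$ (so $|\mathfrak p(v)|$ = number of positive coordinates). Let $X_0\sim\mathcal N(0,1)$, independently i.i.d. $W_{u\to v}\sim\mathcal N(0,1)$ for covering pairs $u\lessdot v$, $X_{(0,0)}=X_0$, and $X_v=\alpha_{|\mathfrak p(v)|}\sum_{u\in\mathfrak p(v)}(X_u+W_{u\to v})$ for $v\ne(0,0)$, with $\alpha_1=1,\alpha_2=1/2$. *)

theory Defs
  imports "HOL-Analysis.Analysis" "HOL-Computational_Algebra.Polynomial"
begin

text \<open>Every X_v is a (deterministic) linear combination
of the independent standard Gaussian sources: X_0 (source None) and W_{u->v}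
(source Some (u,v) for a covering pair u < v).  xcoef i j s is the coefficient of source s in
X_{(i,j)}, obtained by unfolding X_v = alpha_{|p(v)|} * sum_{u in p(v)} (X_u + W_{u->v})
with alpha_1 = 1, alpha_2 = 1/2.\<close>

type_synonym pt = "nat \<times> nat"
type_synonym source = "(pt \<times> pt) option"

fun xcoef :: "nat \<Rightarrow> nat \<Rightarrow> source \<Rightarrow> real" where
  "xcoef 0 0 s = (if s = None then 1 else 0)"
| "xcoef (Suc i) 0 s =
     xcoef i 0 s + (if s = Some ((i,0),(Suc i,0)) then 1 else 0)"
| "xcoef 0 (Suc j) s =
     xcoef 0 j s + (if s = Some ((0,j),(0,Suc j)) then 1 else 0)"
| "xcoef (Suc i) (Suc j) s = (1/2) *
     ((xcoef i (Suc j) s + (if s = Some ((i,Suc j),(Suc i,Suc j)) then 1 else 0))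
    + (xcoef (Suc i) j s + (if s = Some ((Suc i,j),(Suc i,Suc j)) then 1 else 0)))"

text \<open>All sources that can influence X_v for v with coordinates at most n (finite).\<close>
definition sources :: "nat \<Rightarrow> source set" where
  "sources n = insert None
     (Some ` {((a,b),(c,d)) | a b c d. a \<le> n \<and> b \<le> n \<and> c \<le> n \<and> d \<le> n})"

text \<open>Cov(X_(i,j), X_(k,l)) for i,j,k,l \<le> n: the sources are i.i.d. N(0,1), so the covariance
is the sum of products of coefficients.\<close>
definition cov :: "nat \<Rightarrow> pt \<Rightarrow> pt \<Rightarrow> real" where
  "cov n v w = (\<Sum>s\<in>sources n. xcoef (fst v) (snd v) s * xcoef (fst w) (snd w) s)"

definition covL :: "nat \<Rightarrow> nat \<Rightarrow> nat \<Rightarrow> real" where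
  "covL t i j = cov t (i, t - i) (j, t - j)"

text \<open>Q_t(z,w) as a polynomial in w with coefficients in R[z].\<close>
definition Qt :: "nat \<Rightarrow> real poly poly" where
  "Qt t = (\<Sum>j\<le>t. monom (\<Sum>i\<le>t. monom (covL t i j) i) j)"

definition cov_zeta_X0 :: "nat \<Rightarrow> (nat \<Rightarrow> real) \<Rightarrow> real" where
  "cov_zeta_X0 t b = (\<Sum>i\<le>t. b i * cov t (i, t - i) (0,0))"

definition var_zeta :: "nat \<Rightarrow> (nat \<Rightarrow> real) \<Rightarrow> real" where
  "var_zeta t b = (\<Sum>i\<le>t. \<Sum>j\<le>t. b i * b j * covL t i j)"

definition S :: "nat \<Rightarrow> real" where
  "S t = Sup {cov_zeta_X0 t b / sqrt (var_zeta t b) | b. \<exists>i\<le>t. b i \<noteq> 0}"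

end

theory Submission
  imports Defs
begin

lemma xcoef_None: "xcoef i j None = 1"
  by (induction i j "None::source" rule: xcoef.induct) auto

lemma finite_sources: "finite (sources n)"
proof -
  have "{((a,b),(c,d)) | a b c d. a \<le> n \<and> b \<le> n \<and> c \<le> n \<and> d \<le> n}
        \<subseteq> ({..n} \<times> {..n}) \<times> ({..n} \<times> {..n})" by auto
  then have "finite {((a,b),(c,d)) | a b c d. a \<le> n \<and> b \<le> n \<and> c \<le> n \<and> d \<le> n}"
    by (rule finite_subset) auto
  then show ?thesis unfolding sources_def by auto
qed

lemma cov_X0: "cov t (i, t - i) (0,0) = 1"
proof -
  have "cov t (i, t - i) (0,0) = (\<Sum>s\<in>sources t. if s = None then xcoef i (t-i) s else 0)"
    unfolding cov_def by (intro sum.cong) auto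
  also have "\<dots> = xcoef i (t-i) None"
    using finite_sources by (simp add: sum.delta' sources_def)
  finally show ?thesis by (simp add: xcoef_None)
qed

lemma bilin:
  "(\<Sum>s\<in>sources t. (\<Sum>i\<le>t. b i * xcoef i (t-i) s) * (\<Sum>k\<le>t. d k * xcoef k (t-k) s))
   = (\<Sum>i\<le>t. \<Sum>k\<le>t. b i * d k * covL t i k)"
proof -
  have "(\<Sum>s\<in>sources t. (\<Sum>i\<le>t. b i * xcoef i (t-i) s) * (\<Sum>k\<le>t. d k * xcoef k (t-k) s))
     = (\<Sum>s\<in>sources t. \<Sum>i\<le>t. \<Sum>k\<le>t. b i * d k * (xcoef i (t-i) s * xcoef k (t-k) s))"
    by (simp add: sum_product mult_ac)
  also have "\<dots> = (\<Sum>i\<le>t. \<Sum>k\<le>t. \<Sum>s\<in>sources t. b i * d k * (xcoef i (t-i) s * xcoef k (t-k) s))"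
    by (subst sum.swap, intro sum.cong refl, rule sum.swap)
  also have "\<dots> = (\<Sum>i\<le>t. \<Sum>k\<le>t. b i * d k * covL t i k)"
    by (simp add: covL_def cov_def sum_distrib_left)
  finally show ?thesis .
qed

lemma coeff_hyp:
  fixes t :: nat and c :: "nat \<Rightarrow> real"
  shows "coeff ((\<Sum>k\<le>t. monom [:c k:] (t - k)) * Qt t) t
       = (\<Sum>k\<le>t. smult (c k) (\<Sum>i\<le>t. monom (covL t i k) i))"
proof -
  have "(\<Sum>k\<le>t. monom [:c k:] (t - k)) * Qt t
     = (\<Sum>k\<le>t. \<Sum>j\<le>t. monom ([:c k:] * (\<Sum>i\<le>t. monom (covL t i j) i)) (t - k + j))"
    unfolding Qt_def by (simp add: sum_product mult_monom)
  then have "coeff ((\<Sum>k\<le>t. monom [:c k:] (t - k)) * Qt t) t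
     = (\<Sum>k\<le>t. \<Sum>j\<le>t. coeff (monom ([:c k:] * (\<Sum>i\<le>t. monom (covL t i j) i)) (t - k + j)) t)"
    by (simp only: coeff_sum)
  also have "\<dots> = (\<Sum>k\<le>t. \<Sum>j\<le>t. if j = k then [:c k:] * (\<Sum>i\<le>t. monom (covL t i j) i) else 0)"
  proof (intro sum.cong refl)
    fix k j assume "k \<in> {..t}" "j \<in> {..t}"
    then have "(t - k + j = t) = (j = k)" by auto
    then show "coeff (monom ([:c k:] * (\<Sum>i\<le>t. monom (covL t i j) i)) (t - k + j)) t
      = (if j = k then [:c k:] * (\<Sum>i\<le>t. monom (covL t i j) i) else 0)"
      by (simp only: coeff_monom)
  qed
  also have "\<dots> = (\<Sum>k\<le>t. [:c k:] * (\<Sum>i\<le>t. monom (covL t i k) i))"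
    by (intro sum.cong refl) (simp add: sum.delta)
  finally show ?thesis by simp
qed

theorem lemmal:
  fixes t :: nat and c :: "nat \<Rightarrow> real" and A :: real
  assumes "A \<noteq> 0"
    and "coeff ((\<Sum>k\<le>t. monom [:c k:] (t - k)) * Qt t) t = smult A (\<Sum>i\<le>t. monom 1 i)"
  shows "S t = sqrt ((\<Sum>i\<le>t. c i) / A)"
proof -
  have H: "(\<Sum>k\<le>t. c k * covL t i k) = A" if "i \<le> t" for i
  proof -
    have "coeff (\<Sum>k\<le>t. smult (c k) (\<Sum>i\<le>t. monom (covL t i k) i)) i
        = coeff (smult A (\<Sum>i\<le>t. monom (1::real) i)) i"
      using assms(2) coeff_hyp[of c t] by simp
    moreover have "coeff (\<Sum>k\<le>t. smult (c k) (\<Sum>i\<le>t. monom (covL t i k) i)) i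
        = (\<Sum>k\<le>t. c k * covL t i k)"
      using that by (simp add: coeff_sum coeff_monom)
    moreover have "coeff (smult A (\<Sum>i\<le>t. monom (1::real) i)) i = A"
      using that by (simp add: coeff_sum coeff_monom)
    ultimately show ?thesis by simp
  qed
  define u where "u b s = (\<Sum>i\<le>t. b i * xcoef i (t-i) s)" for b s
  define w where "w = u c"
  define W where "W = (\<Sum>s\<in>sources t. (w s)\<^sup>2)"
  have sumb: "(\<Sum>i\<le>t. b i) = (\<Sum>s\<in>sources t. u b s * w s) / A" for b
  proof -
    have "(\<Sum>s\<in>sources t. u b s * w s) = (\<Sum>i\<le>t. \<Sum>k\<le>t. b i * c k * covL t i k)"
      unfolding u_def w_def by (rule bilin)
    also have "\<dots> = (\<Sum>i\<le>t. b i * (\<Sum>k\<le>t. c k * covL t i k))"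
      by (simp add: sum_distrib_left mult_ac)
    also have "\<dots> = (\<Sum>i\<le>t. b i) * A"
      by (simp add: H sum_distrib_right)
    finally show ?thesis using assms(1) by simp
  qed
  have var: "var_zeta t b = (\<Sum>s\<in>sources t. (u b s)\<^sup>2)" for b
    unfolding var_zeta_def u_def power2_eq_square by (rule bilin[symmetric])
  have cz: "cov_zeta_X0 t b = (\<Sum>i\<le>t. b i)" for b
    unfolding cov_zeta_X0_def by (simp add: cov_X0)
  have Wpos: "W > 0"
  proof (rule ccontr)
    assume "\<not> W > 0"
    moreover have "W \<ge> 0" unfolding W_def by (simp add: sum_nonneg)
    ultimately have "W = 0" by simp
    then have w0: "\<forall>s\<in>sources t. w s = 0"
      unfolding W_def using finite_sources by (simp add: sum_nonneg_eq_0_iff)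
    have "(\<Sum>i\<le>t. (\<lambda>i. if i = 0 then 1 else 0::real) i) = 1" by simp
    moreover have "(\<Sum>i\<le>t. (\<lambda>i. if i = 0 then 1 else 0::real) i) = 0"
      by (subst sumb) (simp add: w0)
    ultimately show False by simp
  qed
  define x where "x = W / A\<^sup>2"
  have xpos: "x > 0" unfolding x_def using Wpos assms(1) by simp
  have cx: "(\<Sum>i\<le>t. c i) / A = x"
    unfolding x_def W_def using sumb[of c] by (simp add: w_def power2_eq_square)
  define Z where "Z = {cov_zeta_X0 t b / sqrt (var_zeta t b) | b. \<exists>i\<le>t. b i \<noteq> 0}"
  define b0 where "b0 i = c i / A" for i
  have ub0: "u b0 s = w s / A" for s
    unfolding u_def w_def b0_def by (simp add: sum_divide_distrib)
  have "\<exists>i\<le>t. c i \<noteq> 0"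
  proof (rule ccontr)
    assume "\<not> ?thesis"
    then have "w s = 0" for s unfolding w_def u_def by simp
    then show False using Wpos unfolding W_def by simp
  qed
  then have b0nz: "\<exists>i\<le>t. b0 i \<noteq> 0" unfolding b0_def using assms(1) by auto
  have "cov_zeta_X0 t b0 = x"
    unfolding cz using cx by (simp add: b0_def sum_divide_distrib)
  moreover have "var_zeta t b0 = x"
    unfolding var ub0 x_def W_def by (simp add: power_divide sum_divide_distrib)
  ultimately have "cov_zeta_X0 t b0 / sqrt (var_zeta t b0) = sqrt x"
    using xpos by (metis real_div_sqrt less_imp_le)
  then have inZ: "sqrt x \<in> Z" unfolding Z_def using b0nz
    by (metis (mono_tags, lifting) mem_Collect_eq)
  have bound: "y \<le> sqrt x" if "y \<in> Z" for y
  proof -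
    obtain b where y: "y = cov_zeta_X0 t b / sqrt (var_zeta t b)" using \<open>y \<in> Z\<close> unfolding Z_def by blast
    define V where "V = var_zeta t b"
    define p where "p = (\<Sum>s\<in>sources t. u b s * w s)"
    have V0: "V \<ge> 0" unfolding V_def var by (simp add: sum_nonneg)
    have CS: "p\<^sup>2 \<le> V * W" unfolding p_def V_def var W_def by (rule Cauchy_Schwarz_ineq_sum)
    have yp: "y = (p / A) / sqrt V" unfolding y cz V_def p_def using sumb[of b] by simp
    show ?thesis
    proof (cases "V = 0")
      case True then show ?thesis using yp xpos by simp
    next
      case False
      then have Vp: "sqrt V > 0" using V0 by simp
      have "\<bar>p\<bar> \<le> sqrt (V * W)"
        using CS by (metis real_sqrt_abs real_sqrt_le_mono)
      then have "\<bar>p\<bar> \<le> sqrt V * sqrt W" by (simp add: real_sqrt_mult)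
      then have "\<bar>p\<bar> / sqrt V \<le> sqrt W" using Vp by (simp add: divide_le_eq mult.commute)
      then have "(\<bar>p\<bar> / sqrt V) / \<bar>A\<bar> \<le> sqrt W / \<bar>A\<bar>" using assms(1)
        by (intro divide_right_mono) auto
      moreover have "sqrt x = sqrt W / \<bar>A\<bar>" unfolding x_def by (simp add: real_sqrt_divide)
      moreover have "y \<le> (\<bar>p\<bar> / sqrt V) / \<bar>A\<bar>"
      proof -
        have "y \<le> \<bar>y\<bar>" by simp
        also have "\<bar>y\<bar> = (\<bar>p\<bar> / sqrt V) / \<bar>A\<bar>" unfolding yp using Vp by (simp add: abs_divide abs_mult mult.commute)
        finally show ?thesis .
      qed
      ultimately show ?thesis by linarith
    qed
  qed
  have "Sup Z = sqrt x" by (rule cSup_eq_maximum[OF inZ bound])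
  then show ?thesis unfolding S_def Z_def[symmetric] using cx by simp
qed

end
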